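(* For all positive integers $n$ and $k$, the number of entries equal to $k$ in row $a_1(n)$ of $T_1$ equals $\binom{n-1}{k-1}$.
   Context: For a positive integer $m$, the triangle $T_m$ is an array whose row $x$ ($x=1,2,\dots$) has $x$ entries, in columns $0,\dots,x-1$. Row $1$ is the single entry $1$. For $x>1$, row $x$ is obtained from row $x-1$ by rotating it cyclically left by $m$ positions (the entry in column $c$ of row $x-1$ moves to column $(c-m)\bmod(x-1)\in\{0,\dots,x-2\}$ of row $x$), then appending in column $x-1$ a new entry equal to $1$ plus the entry in column $0$ of row $x-1$. $T_m(x,c)$ denotes the entry in row $x$, column $c$, and $a_m(n)=\min\{x\in\mathbb{N}: T_m(x,x-1)=n\}$. Here $m=1$. The binomial coefficient $\binom{n-1}{k-1}$ is $0$ when $k-1>n-1$. *)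

theory Defs
  imports Main
begin

text \<open>Row x of the triangle T_m, as a list of length x (columns 0..x-1).
  Rows are indexed from 1; Trow m (Suc i) is row i+1. Trow m 0 is an unused dummy.\<close>
fun Trow :: "nat \<Rightarrow> nat \<Rightarrow> nat list" where
  "Trow m 0 = []"
| "Trow m (Suc 0) = [1]"
| "Trow m (Suc (Suc i)) = rotate m (Trow m (Suc i)) @ [1 + hd (Trow m (Suc i))]"

definition T :: "nat \<Rightarrow> nat \<Rightarrow> nat \<Rightarrow> nat" where
  "T m x c = Trow m x ! c"

definition a :: "nat \<Rightarrow> nat \<Rightarrow> nat" where
  "a m n = (LEAST x. x \<ge> 1 \<and> T m x (x - 1) = n)"

end

theory Submission
  imports Defs
begin

fun pc1 :: "nat \<Rightarrow> nat" where
  "pc1 n = (if n = 0 then 1 else pc1 (n div 2) + n mod 2)"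

declare pc1.simps[simp del]

lemma pc1_0[simp]: "pc1 0 = 1" by (simp add: pc1.simps)

lemma pc1_rec: "pc1 u = pc1 (u div 2) + u mod 2"
  by (cases "u = 0") (simp_all add: pc1.simps[of u])

lemma pc1_even[simp]: "pc1 (2*t) = pc1 t"
  using pc1_rec[of "2*t"] by simp

lemma pc1_odd[simp]: "pc1 (2*t+1) = pc1 t + 1"
  using pc1_rec[of "2*t+1"] by simp

lemma pc1_odd'[simp]: "pc1 (Suc (2*t)) = Suc (pc1 t)"
  using pc1_odd[of t] by simp

lemma pc1_ge1: "pc1 c \<ge> 1"
proof (induction c rule: less_induct)
  case (less c) then show ?case
    by (cases "c = 0") (auto simp: pc1_rec[of c] intro: le_trans[OF _ le_add1])
qed

lemma pc1_pow: "u < 2^j \<Longrightarrow> pc1 (2^j + u) = pc1 u + 1"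
proof (induction j arbitrary: u)
  case 0 then show ?case using pc1_odd[of 0] by simp
next
  case (Suc j)
  have "u div 2 < 2^j" using Suc.prems by auto
  have "pc1 (2^Suc j + u) = pc1 ((2^Suc j + u) div 2) + (2^Suc j + u) mod 2"
    by (rule pc1_rec)
  also have "(2^Suc j + u) div 2 = 2^j + u div 2" by simp
  also have "(2^Suc j + u) mod 2 = u mod 2" by simp
  finally show ?case using Suc.IH[OF \<open>u div 2 < 2^j\<close>] pc1_rec[of u] by simp
qed

lemma pc1_le: "c < 2^m \<Longrightarrow> pc1 c \<le> m + 1"
proof (induction m arbitrary: c)
  case 0 then show ?case by simp
next
  case (Suc m)
  have "c div 2 < 2^m" using Suc.prems by auto
  from Suc.IH[OF this] show ?case using pc1_rec[of c] by simp
qed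

lemma pc1_lt: "c + 1 < 2^m \<Longrightarrow> pc1 c \<le> m"
proof (induction m arbitrary: c)
  case 0 then show ?case by simp
next
  case (Suc m)
  show ?case
  proof (cases "even c")
    case True
    have "c div 2 < 2^m" using Suc.prems by auto
    from pc1_le[OF this] show ?thesis using pc1_rec[of c] True by simp
  next
    case False
    then obtain d where d: "c = 2*d+1" using oddE by blast
    have "c div 2 + 1 < 2^m" using Suc.prems unfolding d by simp
    from Suc.IH[OF this] show ?thesis using pc1_rec[of c] False by simp
  qed
qed

lemma pc1_full: "pc1 (2^m - 1) = m + 1"
proof (induction m)
  case 0 then show ?case by simp
next
  case (Suc m)
  have "(2::nat)^Suc m - 1 = 2*(2^m - 1) + 1"
  proof -
    obtain p where "(2::nat)^m = Suc p" using not0_implies_Suc[of "(2::nat)^m"] by auto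
    then show ?thesis by simp
  qed
  then show ?case using Suc by simp
qed

lemma Trow_len: "length (Trow m x) = x"
  by (induction m x rule: Trow.induct) auto

lemma row_step:
  assumes N: "N \<ge> 1" and R: "Trow 1 N = map pc1 [0..<N]"
  shows "t \<le> N \<Longrightarrow> Trow 1 (N+t) = map pc1 [t..<N] @ map pc1 [0..<2*t]"
proof (induction t)
  case 0 then show ?case using R by simp
next
  case (Suc t)
  then have tN: "t < N" by simp
  have IH: "Trow 1 (N+t) = pc1 t # map pc1 [Suc t..<N] @ map pc1 [0..<2*t]"
    using Suc.IH tN by (simp add: upt_conv_Cons)
  obtain i where i: "N + t = Suc i" using N by (cases "N+t") auto
  have "Trow 1 (N + Suc t) = Trow 1 (Suc (Suc i))" using i by simp
  also have "\<dots> = rotate 1 (Trow 1 (Suc i)) @ [1 + hd (Trow 1 (Suc i))]" by simp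
  also have "\<dots> = map pc1 [Suc t..<N] @ map pc1 [0..<2*t] @ [pc1 t, 1 + pc1 t]"
    using IH i by simp
  also have "map pc1 [0..<2*t] @ [pc1 t, 1 + pc1 t] = map pc1 [0..<2*Suc t]"
  proof -
    have "[0..<2*Suc t] = [0..<2*t] @ [2*t, 2*t+1]"
      by simp
    then show ?thesis by simp
  qed
  finally show ?case .
qed

lemma row_pow: "Trow 1 (2^j) = map pc1 [0..<2^j]"
proof (induction j)
  case 0 then show ?case by simp
next
  case (Suc j)
  have "Trow 1 (2^j + 2^j) = map pc1 [2^j..<2^j] @ map pc1 [0..<2*2^j]"
    by (rule row_step[OF _ Suc.IH]) simp_all
  then show ?case by (simp add: mult_2)
qed

lemma last_row_aux:
  assumes t: "t \<le> 2^j"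
  shows "last (Trow 1 (2^j + t)) = pc1 (2^j + t - 1)"
proof -
  have R: "Trow 1 (2^j + t) = map pc1 [t..<2^j] @ map pc1 [0..<2*t]"
    by (rule row_step[OF _ row_pow t]) simp
  show ?thesis
  proof (cases "t = 0")
    case True
    then show ?thesis using R by (simp add: last_map)
  next
    case False
    then obtain t' where t': "t = Suc t'" using not0_implies_Suc by blast
    have "last (Trow 1 (2^j + t)) = pc1 (2*(t-1)+1)" using R unfolding t'
      by (simp add: last_map)
    also have "\<dots> = pc1 (t-1) + 1" by simp
    also have "\<dots> = pc1 (2^j + t - 1)"
    proof (cases "t = 2^j")
      case True
      then have "2*(t-1)+1 = 2^j + t - 1" using t' by simp
      then show ?thesis using pc1_odd[of "t-1"] by metis
    next
      case ne: False
      then have "t - 1 < 2^j" using t by simp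
      from pc1_pow[OF this] show ?thesis using False by simp
    qed
    finally show ?thesis .
  qed
qed

lemma last_row: "1 \<le> x \<Longrightarrow> x < 2^m \<Longrightarrow> last (Trow 1 x) = pc1 (x - 1)"
proof (induction m arbitrary: x)
  case 0 then show ?case by simp
next
  case (Suc m)
  show ?case
  proof (cases "x < 2^m")
    case True then show ?thesis using Suc by blast
  next
    case False
    then obtain t where "x = 2^m + t" "t \<le> 2^m" using Suc.prems
      by (metis add_diff_inverse_nat le_add_diff_inverse less_imp_le_nat mult_2 power_Suc add_less_cancel_left not_less)
    then show ?thesis using last_row_aux by simp
  qed
qed

lemma T_last: "1 \<le> x \<Longrightarrow> T 1 x (x - 1) = pc1 (x - 1)"
proof -
  assume x: "1 \<le> x"
  have "x < 2^x" by simp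
  have "T 1 x (x - 1) = last (Trow 1 x)"
    unfolding T_def using Trow_len[of 1 x] x
    by (metis last_conv_nth list.size(3) not_one_le_zero)
  then show ?thesis using last_row[OF x \<open>x < 2^x\<close>] by simp
qed

lemma a_val: "n \<ge> 1 \<Longrightarrow> a 1 n = 2^(n-1)"
  unfolding a_def
proof (rule Least_equality)
  assume n: "n \<ge> 1"
  show "1 \<le> (2::nat)^(n-1) \<and> T 1 (2^(n-1)) (2^(n-1) - 1) = n"
    using T_last[of "2^(n-1)"] pc1_full[of "n-1"] n by simp
  fix y assume y: "1 \<le> y \<and> T 1 y (y - 1) = n"
  show "2^(n-1) \<le> y"
  proof (rule ccontr)
    assume "\<not> 2^(n-1) \<le> y"
    then have "y - 1 + 1 < 2^(n-1)" using y by simp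
    from pc1_lt[OF this] have "pc1 (y-1) \<le> n - 1" .
    then show False using y T_last[of y] n by simp
  qed
qed

lemma count_pc1: "card {c. c < 2^m \<and> pc1 c = Suc k} = m choose k"
proof (induction m arbitrary: k)
  case 0
  have "{c. c < 2^0 \<and> pc1 c = Suc k} = (if k = 0 then {0} else {})" by auto
  then show ?case by simp
next
  case (Suc m)
  have eq: "{c. c < 2^Suc m \<and> pc1 c = Suc k} =
     (\<lambda>d. 2*d) ` {d. d < 2^m \<and> pc1 d = Suc k} \<union> (\<lambda>d. 2*d+1) ` {d. d < 2^m \<and> pc1 d = k}"
  proof (rule set_eqI, rule iffI)
    fix c assume c: "c \<in> {c. c < 2^Suc m \<and> pc1 c = Suc k}"
    show "c \<in> (\<lambda>d. 2*d) ` {d. d < 2^m \<and> pc1 d = Suc k} \<union> (\<lambda>d. 2*d+1) ` {d. d < 2^m \<and> pc1 d = k}"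
    proof (cases "even c")
      case True
      then obtain d where "c = 2*d" by blast
      then show ?thesis using c by auto
    next
      case False
      then obtain d where d: "c = 2*d+1" using oddE by blast
      then have "d \<in> {d. d < 2^m \<and> pc1 d = k}" using c by auto
      then show ?thesis unfolding d by blast
    qed
  qed auto
  have dj: "(\<lambda>d. 2*d) ` {d. d < 2^m \<and> pc1 d = Suc k} \<inter> (\<lambda>d. 2*d+1) ` {d. d < 2^m \<and> pc1 d = k} = {}"
    by auto presburger
  have c1: "card ((\<lambda>d. 2*d) ` {d. d < 2^m \<and> pc1 d = Suc k}) = m choose k"
    by (subst card_image) (auto simp: inj_on_def Suc.IH)
  have c2: "card ((\<lambda>d. 2*d+1) ` {d. d < 2^m \<and> pc1 d = k}) = (if k = 0 then 0 else m choose (k - 1))"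
  proof (cases k)
    case 0
    then have "{d. d < 2^m \<and> pc1 d = k} = {}" using pc1_ge1 by (metis (mono_tags, lifting) Collect_empty_eq not_one_le_zero)
    then show ?thesis using 0 by simp
  next
    case (Suc k') then show ?thesis
      by (subst card_image) (auto simp: inj_on_def Suc.IH)
  qed
  show ?case
  proof -
    have f1: "finite ((\<lambda>d. 2*d) ` {d. d < 2^m \<and> pc1 d = Suc k})" by simp
    have f2: "finite ((\<lambda>d. 2*d+1) ` {d. d < 2^m \<and> pc1 d = k})" by simp
    show ?thesis unfolding eq card_Un_disjoint[OF f1 f2 dj] c1 c2
      by (cases k) simp_all
  qed
qed

theorem mainTheorem16:
  fixes n k :: nat
  assumes "n \<ge> 1" and "k \<ge> 1"
  shows "card {c. c < a 1 n \<and> T 1 (a 1 n) c = k} = (n - 1) choose (k - 1)"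
proof -
  have A: "a 1 n = 2^(n-1)" using a_val assms(1) .
  have "{c. c < a 1 n \<and> T 1 (a 1 n) c = k} = {c. c < 2^(n-1) \<and> pc1 c = Suc (k-1)}"
    using assms(2) unfolding A T_def row_pow by auto
  then show ?thesis using count_pc1 by simp
qed

end
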